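(* SW-PAV can fail to produce a committee satisfying IW-JR: there exists an approval-based SCV instance in which a committee maximizing the SW-PAV score does not satisfy IW-JR.
   Context: An approval-based sub-committee voting (SCV) instance consists of a set of voters $N=\{1,\ldots,n\}$, a finite set of candidates $C$ partitioned into candidate subsets $C_1,\ldots,C_\ell$, positive integer quotas $k_j\le |C_j|$, and approval ballots $A_i\subseteq C$ for $i\in N$. A committee is a set $W\subseteq C$ with $|W\cap C_j|=k_j$ for every $j$. Let $r(0)=0$ and $r(t)=\sum_{p=1}^t 1/p$ for $t\ge1$. The SW-PAV score of $W$ is $\sum_{i\in N} r(|W\cap A_i|)$. $W$ satisfies Intra-wise JR (IW-JR) if for every $X\subseteq N$ and every $j$, whenever $|X|\ge n/k_j$ and $|(\bigcap_{i\in X}A_i)\cap C_j|\ge 1$, we have $|W\cap C_j\cap \bigcup_{i\in X}A_i|\ge 1$. *)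

theory Defs
  imports Complex_Main
begin

definition scv_instance ::
  "nat \<Rightarrow> 'c set \<Rightarrow> nat \<Rightarrow> (nat \<Rightarrow> 'c set) \<Rightarrow> (nat \<Rightarrow> nat) \<Rightarrow> (nat \<Rightarrow> 'c set) \<Rightarrow> bool" where
  "scv_instance n C l Cs k A \<longleftrightarrow>
     n \<ge> 1 \<and> finite C \<and>
     (\<forall>j<l. Cs j \<noteq> {}) \<and>
     (\<forall>j<l. \<forall>j'<l. j \<noteq> j' \<longrightarrow> Cs j \<inter> Cs j' = {}) \<and>
     (\<Union>j<l. Cs j) = C \<and>
     (\<forall>j<l. 0 < k j \<and> k j \<le> card (Cs j)) \<and>
     (\<forall>i\<in>{1..n}. A i \<subseteq> C)"

definition is_committee ::
  "'c set \<Rightarrow> nat \<Rightarrow> (nat \<Rightarrow> 'c set) \<Rightarrow> (nat \<Rightarrow> nat) \<Rightarrow> 'c set \<Rightarrow> bool" where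
  "is_committee C l Cs k W \<longleftrightarrow> W \<subseteq> C \<and> (\<forall>j<l. card (W \<inter> Cs j) = k j)"

definition harm :: "nat \<Rightarrow> real" where
  "harm t = (\<Sum>p=1..t. 1 / real p)"

definition sw_pav_score :: "nat \<Rightarrow> (nat \<Rightarrow> 'c set) \<Rightarrow> 'c set \<Rightarrow> real" where
  "sw_pav_score n A W = (\<Sum>i\<in>{1..n}. harm (card (W \<inter> A i)))"

definition iw_jr ::
  "nat \<Rightarrow> nat \<Rightarrow> (nat \<Rightarrow> 'c set) \<Rightarrow> (nat \<Rightarrow> nat) \<Rightarrow> (nat \<Rightarrow> 'c set) \<Rightarrow> 'c set \<Rightarrow> bool" where
  "iw_jr n l Cs k A W \<longleftrightarrow>
     (\<forall>X. X \<subseteq> {1..n} \<longrightarrow> (\<forall>j<l.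
        real (card X) \<ge> real n / real (k j) \<and> (\<Inter>i\<in>X. A i) \<inter> Cs j \<noteq> {}
        \<longrightarrow> W \<inter> Cs j \<inter> (\<Union>i\<in>X. A i) \<noteq> {}))"

end

theory Submission
  imports Defs
begin

lemma harm_simps: "harm 0 = 0" "harm 1 = 1" "harm 2 = 3/2" "harm 3 = 11/6"
  by (simp_all add: harm_def numeral_eq_Suc)

lemma harm_suc: "harm (Suc 0) = 1" "harm (Suc (Suc 0)) = 3/2" "harm (Suc (Suc (Suc 0))) = 11/6"
  by (simp_all add: harm_def numeral_eq_Suc)

lemma card8:
  fixes S :: "nat set"
  assumes "S \<in> {{},{2},{3},{4},{2,3},{2,4},{3,4},{2,3,4}}" "card S = 2"
  shows "S \<in> {{2,3},{2,4},{3,4}}"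
  using assms by (elim insertE emptyE) simp_all

lemma committee_cases:
  assumes "W' \<subseteq> {0,1,2,3,4::nat}" "card (W' \<inter> {0,1}) = 2" "card (W' \<inter> {2,3,4}) = 2"
  shows "W' = {0,1,2,3} \<or> W' = {0,1,2,4} \<or> W' = {0,1,3,4}"
proof -
  have e: "W' = (W' \<inter> {0,1}) \<union> (W' \<inter> {2,3,4})" using assms(1) by blast
  have a: "W' \<inter> {0,1} = {0,1}"
    using assms(2) by (metis Int_lower2 card_subset_eq finite.emptyI finite_insert card_2_iff zero_neq_one)
  have b: "W' \<inter> {2,3,4} \<in> {{2,3},{2,4},{3,4}}"
  proof -
    obtain x y where xy: "W' \<inter> {2,3,4} = {x,y}" "x \<noteq> y"
      using assms(3) by (meson card_2_iff)
    then have "x = 2 \<or> x = 3 \<or> x = 4" "y = 2 \<or> y = 3 \<or> y = 4" by blast+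
    then show ?thesis unfolding xy(1) using xy(2)
      by (elim disjE) (simp_all add: insert_commute)
  qed
  have e2: "W' = {0,1} \<union> (W' \<inter> {2,3,4})" using e a by simp
  from b have "W' \<inter> {2,3,4} = {2,3} \<or> W' \<inter> {2,3,4} = {2,4} \<or> W' \<inter> {2,3,4} = {3,4}"
    by (simp only: insert_iff empty_iff simp_thms)
  then show ?thesis
  proof (elim disjE)
    assume "W' \<inter> {2,3,4} = {2,3}" then have "W' = {0,1} \<union> {2,3}" using e2 by simp
    then have "W' = {0,1,2,3}" by auto
    then show ?thesis by simp
  next
    assume "W' \<inter> {2,3,4} = {2,4}" then have "W' = {0,1} \<union> {2,4}" using e2 by simp
    then have "W' = {0,1,2,4}" by auto
    then show ?thesis by simp
  next
    assume "W' \<inter> {2,3,4} = {3,4}" then have "W' = {0,1} \<union> {3,4}" using e2 by simp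
    then have "W' = {0,1,3,4}" by auto
    then show ?thesis by simp
  qed
qed

theorem mainTheorem12:
  shows "\<exists>(n::nat) (C::nat set) (l::nat) (Cs::nat \<Rightarrow> nat set) (k::nat \<Rightarrow> nat)
           (A::nat \<Rightarrow> nat set) (W::nat set).
           scv_instance n C l Cs k A \<and>
           is_committee C l Cs k W \<and>
           (\<forall>W'. is_committee C l Cs k W' \<longrightarrow> sw_pav_score n A W' \<le> sw_pav_score n A W) \<and>
           \<not> iw_jr n l Cs k A W"
proof -
  define Cs :: "nat \<Rightarrow> nat set" where "Cs = (\<lambda>j. if j = 0 then {0,1} else {2,3,4})"
  define A :: "nat \<Rightarrow> nat set" where "A = (\<lambda>i. if i = 1 then {0,1,4} else {2,3})"
  define k :: "nat \<Rightarrow> nat" where "k = (\<lambda>j. 2)"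
  have less2: "\<And>j::nat. j < 2 \<longleftrightarrow> j = 0 \<or> j = 1" by auto
  have i12: "{1..2::nat} = {1,2}" by auto
  have inst: "scv_instance 2 {0,1,2,3,4} 2 Cs k A"
  proof -
    have l: "{..<2::nat} = {0,1}" by auto
    show ?thesis unfolding scv_instance_def l Cs_def k_def A_def
      by (intro conjI) (simp_all add: less_Suc_eq)
  qed
  have com: "is_committee {0,1,2,3,4} 2 Cs k {0,1,2,3}"
    unfolding is_committee_def Cs_def k_def less2 by auto
  have sc: "sw_pav_score 2 A W = (\<Sum>i\<in>{1,2}. harm (card (W \<inter> A i)))" for W
    unfolding sw_pav_score_def i12 ..
  have opt: "\<forall>W'. is_committee {0,1,2,3,4} 2 Cs k W' \<longrightarrow> sw_pav_score 2 A W' \<le> sw_pav_score 2 A {0,1,2,3}"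
  proof (intro allI impI)
    fix W' assume "is_committee {0,1,2,3,4} 2 Cs k W'"
    then have "W' \<subseteq> {0,1,2,3,4}" "card (W' \<inter> {0,1}) = 2" "card (W' \<inter> {2,3,4}) = 2"
      unfolding is_committee_def Cs_def k_def less2 by auto
    then have "W' = {0,1,2,3} \<or> W' = {0,1,2,4} \<or> W' = {0,1,3,4}" by (rule committee_cases)
    then show "sw_pav_score 2 A W' \<le> sw_pav_score 2 A {0,1,2,3}"
    proof (elim disjE)
      assume "W' = {0,1,2,4}"
      moreover have "card ({0,1,2,4} \<inter> {0,1,4::nat}) = 3" "card ({0,1,2,4} \<inter> {2,3::nat}) = 1"
        "card ({0,1,2,3} \<inter> {0,1,4::nat}) = 2" "card ({0,1,2,3} \<inter> {2,3::nat}) = 2"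
        by (simp_all add: insert_commute)
      ultimately show ?thesis unfolding sc by (simp add: A_def harm_simps harm_suc)
    next
      assume "W' = {0,1,3,4}"
      moreover have "card ({0,1,3,4} \<inter> {0,1,4::nat}) = 3" "card ({0,1,3,4} \<inter> {2,3::nat}) = 1"
        "card ({0,1,2,3} \<inter> {0,1,4::nat}) = 2" "card ({0,1,2,3} \<inter> {2,3::nat}) = 2"
        by (simp_all add: insert_commute)
      ultimately show ?thesis unfolding sc by (simp add: A_def harm_simps harm_suc)
    qed simp
  qed
  have njr: "\<not> iw_jr 2 2 Cs k A {0,1,2,3}"
    unfolding iw_jr_def
  proof
    assume h: "\<forall>X. X \<subseteq> {1..2} \<longrightarrow> (\<forall>j<2. real (card X) \<ge> real 2 / real (k j) \<and> (\<Inter>i\<in>X. A i) \<inter> Cs j \<noteq> {}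
        \<longrightarrow> {0,1,2,3} \<inter> Cs j \<inter> (\<Union>i\<in>X. A i) \<noteq> {})"
    have "{1} \<subseteq> {1..2::nat}" by auto
    moreover have "real 2 / real (k 1) \<le> real (card {1::nat})" by (simp add: k_def)
    moreover have "(\<Inter>i\<in>{1::nat}. A i) \<inter> Cs 1 \<noteq> {}" by (simp add: Cs_def A_def)
    moreover have "(1::nat) < 2" by simp
    ultimately have "{0,1,2,3} \<inter> Cs 1 \<inter> (\<Union>i\<in>{1}. A i) \<noteq> {}"
      using h[rule_format, of "{1}" 1] by (simp only: simp_thms)
    then show False by (auto simp: Cs_def A_def)
  qed
  show ?thesis using inst com opt njr by blast
qed

end
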